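(* Let $k$ be a field, let $k_\omega$ be the $k$-algebra of all $\mathbb{N}\times\mathbb{N}$ matrices over $k$ (rows and columns indexed by positive integers) in which each row has only finitely many non-zero entries, let $N\subseteq k_\omega$ be the set of strictly lower triangular matrices with only finitely many non-zero entries, and let $R=k+N$ (scalar matrices plus $N$), a subalgebra of $k_\omega$. Then $R$ is left almost perfect but not right almost perfect; more precisely, if $I$ is the two-sided ideal of $R$ generated by the matrix unit $E_{2,1}$, then $R/I$ is not right perfect.
   Context: $E_{i,j}$ denotes the matrix unit with $1$ in position $(i,j)$ and $0$ elsewhere. A ring $R$ is right (resp. left) almost perfect if $R/I$ is a right (resp. left) perfect ring for every two-sided ideal $I$ of $R$ with $I\neq 0$, $I\neq R$. *)

theory Defs
  imports "HOL-Algebra.QuotRing"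
begin

definition left_ideal :: "('a, 'b) ring_scheme \<Rightarrow> 'a set \<Rightarrow> bool" where
  "left_ideal R L \<longleftrightarrow> additive_subgroup L R \<and>
     (\<forall>r\<in>carrier R. \<forall>x\<in>L. r \<otimes>\<^bsub>R\<^esub> x \<in> L)"

definition maximal_left_ideal :: "('a, 'b) ring_scheme \<Rightarrow> 'a set \<Rightarrow> bool" where
  "maximal_left_ideal R L \<longleftrightarrow> left_ideal R L \<and> L \<noteq> carrier R \<and>
     (\<forall>L'. left_ideal R L' \<and> L \<subseteq> L' \<and> L' \<noteq> carrier R \<longrightarrow> L' = L)"

definition jacobson_radical :: "('a, 'b) ring_scheme \<Rightarrow> 'a set" where
  "jacobson_radical R = carrier R \<inter> \<Inter> {L. maximal_left_ideal R L}"

definition left_artinian :: "('a, 'b) ring_scheme \<Rightarrow> bool" where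
  "left_artinian R \<longleftrightarrow> (\<forall>f :: nat \<Rightarrow> 'a set.
     (\<forall>n. left_ideal R (f n) \<and> f (Suc n) \<subseteq> f n) \<longrightarrow> (\<exists>m. \<forall>n\<ge>m. f n = f m))"

definition semilocal :: "('a, 'b) ring_scheme \<Rightarrow> bool" where
  "semilocal R \<longleftrightarrow> left_artinian (R Quot (jacobson_radical R))"

fun lprod :: "('a, 'b) ring_scheme \<Rightarrow> (nat \<Rightarrow> 'a) \<Rightarrow> nat \<Rightarrow> 'a" where
  "lprod R a 0 = \<one>\<^bsub>R\<^esub>"
| "lprod R a (Suc n) = lprod R a n \<otimes>\<^bsub>R\<^esub> a n"

fun rprod :: "('a, 'b) ring_scheme \<Rightarrow> (nat \<Rightarrow> 'a) \<Rightarrow> nat \<Rightarrow> 'a" where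
  "rprod R a 0 = \<one>\<^bsub>R\<^esub>"
| "rprod R a (Suc n) = a n \<otimes>\<^bsub>R\<^esub> rprod R a n"

definition left_T_nilpotent :: "('a, 'b) ring_scheme \<Rightarrow> 'a set \<Rightarrow> bool" where
  "left_T_nilpotent R I \<longleftrightarrow> (\<forall>a. (\<forall>n. a n \<in> I) \<longrightarrow> (\<exists>n\<ge>1. lprod R a n = \<zero>\<^bsub>R\<^esub>))"

definition right_T_nilpotent :: "('a, 'b) ring_scheme \<Rightarrow> 'a set \<Rightarrow> bool" where
  "right_T_nilpotent R I \<longleftrightarrow> (\<forall>a. (\<forall>n. a n \<in> I) \<longrightarrow> (\<exists>n\<ge>1. rprod R a n = \<zero>\<^bsub>R\<^esub>))"

definition left_perfect :: "('a, 'b) ring_scheme \<Rightarrow> bool" where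
  "left_perfect R \<longleftrightarrow> semilocal R \<and> left_T_nilpotent R (jacobson_radical R)"

definition right_perfect :: "('a, 'b) ring_scheme \<Rightarrow> bool" where
  "right_perfect R \<longleftrightarrow> semilocal R \<and> right_T_nilpotent R (jacobson_radical R)"

definition left_almost_perfect :: "('a, 'b) ring_scheme \<Rightarrow> bool" where
  "left_almost_perfect R \<longleftrightarrow> (\<forall>I. ideal I R \<and> I \<noteq> {\<zero>\<^bsub>R\<^esub>} \<and> I \<noteq> carrier R
      \<longrightarrow> left_perfect (R Quot I))"

definition right_almost_perfect :: "('a, 'b) ring_scheme \<Rightarrow> bool" where
  "right_almost_perfect R \<longleftrightarrow> (\<forall>I. ideal I R \<and> I \<noteq> {\<zero>\<^bsub>R\<^esub>} \<and> I \<noteq> carrier R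
      \<longrightarrow> right_perfect (R Quot I))"

text \<open>Indices are 0-based: paper's index i corresponds to i-1 here.\<close>
type_synonym 'k mat = "nat \<Rightarrow> nat \<Rightarrow> 'k"

definition row_finite :: "'k::zero mat \<Rightarrow> bool" where
  "row_finite A \<longleftrightarrow> (\<forall>i. finite {j. A i j \<noteq> 0})"

definition komega_carrier :: "'k::field mat set" where
  "komega_carrier = {A. row_finite A}"

definition mat_mult :: "'k::field mat \<Rightarrow> 'k mat \<Rightarrow> 'k mat" where
  "mat_mult A B = (\<lambda>i j. \<Sum>l\<in>{l. A i l \<noteq> 0}. A i l * B l j)"

definition mat_one :: "'k::field mat" where
  "mat_one = (\<lambda>i j. if i = j then 1 else 0)"

definition mat_unit :: "nat \<Rightarrow> nat \<Rightarrow> 'k::field mat" where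
  "mat_unit p q = (\<lambda>i j. if i = p \<and> j = q then 1 else 0)"

definition N_set :: "'k::field mat set" where
  "N_set = {A. finite {(i, j). A i j \<noteq> 0} \<and> (\<forall>i j. i \<le> j \<longrightarrow> A i j = 0)}"

definition R_carrier :: "'k::field mat set" where
  "R_carrier = {(\<lambda>i j. c * mat_one i j + A i j) | c A. A \<in> N_set}"

definition komega :: "'k::field mat ring" where
  "komega = \<lparr>carrier = komega_carrier, mult = mat_mult, one = mat_one,
             zero = (\<lambda>i j. 0), add = (\<lambda>A B i j. A i j + B i j)\<rparr>"

definition R_ring :: "'k::field mat ring" where
  "R_ring = komega\<lparr>carrier := R_carrier\<rparr>"

end

theory Submission
  imports Defs
begin


definition madd :: "'k::field mat \<Rightarrow> 'k mat \<Rightarrow> 'k mat" where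
  "madd A B = (\<lambda>i j. A i j + B i j)"
definition msc :: "'k::field \<Rightarrow> 'k mat \<Rightarrow> 'k mat" where
  "msc c A = (\<lambda>i j. c * A i j)"

lemma mm_sub:
  assumes "finite S" "{l. A i l \<noteq> 0} \<subseteq> S"
  shows "mat_mult A B i j = (\<Sum>l\<in>S. A i l * B l j)"
  unfolding mat_mult_def
  apply (rule sum.mono_neutral_left) 
  using assms apply simp
  using assms apply simp
  apply simp
  done

lemma mm_nz: assumes "mat_mult A B i j \<noteq> 0" shows "\<exists>l. A i l \<noteq> 0 \<and> B l j \<noteq> 0"
proof (rule ccontr)
  assume "\<not> (\<exists>l. A i l \<noteq> 0 \<and> B l j \<noteq> 0)"
  then have "\<forall>l\<in>{l. A i l \<noteq> 0}. A i l * B l j = 0" by auto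
  then have "mat_mult A B i j = 0" unfolding mat_mult_def by (rule sum.neutral)
  with assms show False by simp
qed

lemma mm_assoc:
  assumes "row_finite A" "row_finite B"
  shows "mat_mult (mat_mult A B) C = mat_mult A (mat_mult B C)"
proof (intro ext)
  fix i j
  define S where "S = {l. A i l \<noteq> 0}"
  define T where "T = (\<Union>l\<in>S. {m. B l m \<noteq> 0})"
  have fS: "finite S" using assms(1) unfolding row_finite_def S_def by auto
  have fT: "finite T" unfolding T_def using fS assms(2) unfolding row_finite_def by auto
  have sub: "{m. mat_mult A B i m \<noteq> 0} \<subseteq> T"
  proof
    fix m assume "m \<in> {m. mat_mult A B i m \<noteq> 0}"
    then obtain l where "A i l \<noteq> 0" "B l m \<noteq> 0" using mm_nz by blast
    then show "m \<in> T" unfolding T_def S_def by auto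
  qed
  have "mat_mult (mat_mult A B) C i j = (\<Sum>m\<in>T. mat_mult A B i m * C m j)"
    by (rule mm_sub[of T "mat_mult A B" i C j, OF fT sub])
  also have "\<dots> = (\<Sum>m\<in>T. (\<Sum>l\<in>S. A i l * B l m) * C m j)"
    by (simp add: mat_mult_def S_def)
  also have "\<dots> = (\<Sum>m\<in>T. \<Sum>l\<in>S. A i l * B l m * C m j)"
    by (simp add: sum_distrib_right)
  also have "\<dots> = (\<Sum>l\<in>S. \<Sum>m\<in>T. A i l * B l m * C m j)"
    by (rule sum.swap)
  also have "\<dots> = (\<Sum>l\<in>S. A i l * (\<Sum>m\<in>T. B l m * C m j))"
    by (simp add: sum_distrib_left mult.assoc)
  also have "\<dots> = (\<Sum>l\<in>S. A i l * mat_mult B C l j)"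
  proof (rule sum.cong[OF refl])
    fix l assume "l \<in> S"
    then have "{m. B l m \<noteq> 0} \<subseteq> T" unfolding T_def by auto
    then show "A i l * (\<Sum>m\<in>T. B l m * C m j) = A i l * mat_mult B C l j"
      using mm_sub[of T B l C j, OF fT] by simp
  qed
  also have "\<dots> = mat_mult A (mat_mult B C) i j" by (simp add: mat_mult_def S_def)
  finally show "mat_mult (mat_mult A B) C i j = mat_mult A (mat_mult B C) i j" .
qed

lemma mm_radd: "mat_mult A (madd B C) = madd (mat_mult A B) (mat_mult A C)"
  by (simp add: mat_mult_def madd_def distrib_left sum.distrib)

lemma mm_ladd:
  assumes "row_finite A" "row_finite B"
  shows "mat_mult (madd A B) C = madd (mat_mult A C) (mat_mult B C)"
proof (intro ext)
  fix i j
  define S where "S = {l. A i l \<noteq> 0} \<union> {l. B i l \<noteq> 0}"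
  have fS: "finite S" using assms unfolding row_finite_def S_def by auto
  have "mat_mult (madd A B) C i j = (\<Sum>l\<in>S. madd A B i l * C l j)"
    by (rule mm_sub[of S "madd A B" i C j, OF fS]) (auto simp: madd_def S_def)
  also have "\<dots> = (\<Sum>l\<in>S. (A i l + B i l) * C l j)" by (simp add: madd_def)
  also have "\<dots> = (\<Sum>l\<in>S. A i l * C l j) + (\<Sum>l\<in>S. B i l * C l j)"
    by (simp add: distrib_right sum.distrib)
  also have "\<dots> = madd (mat_mult A C) (mat_mult B C) i j"
  proof -
    have sA: "{l. A i l \<noteq> 0} \<subseteq> S" "{l. B i l \<noteq> 0} \<subseteq> S" unfolding S_def by auto
    show ?thesis unfolding madd_def mm_sub[of S A i C j, OF fS sA(1)] mm_sub[of S B i C j, OF fS sA(2)] ..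
  qed
  finally show "mat_mult (madd A B) C i j = madd (mat_mult A C) (mat_mult B C) i j" .
qed

lemma mm_one_left: "mat_mult mat_one B = B"
proof (intro ext)
  fix i j
  have "{l. (mat_one::'a mat) i l \<noteq> 0} = {i}" by (auto simp: mat_one_def)
  then show "mat_mult mat_one B i j = B i j" by (simp add: mat_mult_def mat_one_def)
qed

lemma mm_one_right: assumes "row_finite A" shows "mat_mult A mat_one = A"
proof (intro ext)
  fix i j
  have f: "finite (insert j {l. A i l \<noteq> 0})" using assms by (auto simp: row_finite_def)
  have "mat_mult A mat_one i j = (\<Sum>l\<in>insert j {l. A i l \<noteq> 0}. A i l * mat_one l j)"
    by (rule mm_sub[of _ A i mat_one j, OF f]) auto
  also have "\<dots> = A i j" using f by (simp add: mat_one_def sum.delta'[OF f] if_distrib cong: if_cong)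
  finally show "mat_mult A mat_one i j = A i j" .
qed

lemma mm_rsc: "mat_mult A (msc c B) = msc c (mat_mult A B)"
  by (simp add: mat_mult_def msc_def sum_distrib_left mult.left_commute)

lemma mm_lsc: assumes "row_finite A" shows "mat_mult (msc c A) B = msc c (mat_mult A B)"
proof (intro ext)
  fix i j
  define S where "S = {l. A i l \<noteq> 0}"
  have fS: "finite S" using assms unfolding row_finite_def S_def by auto
  have "mat_mult (msc c A) B i j = (\<Sum>l\<in>S. msc c A i l * B l j)"
    by (rule mm_sub[of S "msc c A" i B j, OF fS]) (auto simp: msc_def S_def)
  also have "\<dots> = (\<Sum>l\<in>S. c * A i l * B l j)" by (simp add: msc_def)
  also have "\<dots> = msc c (mat_mult A B) i j"
    by (simp add: msc_def mat_mult_def S_def sum_distrib_left mult.assoc)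
  finally show "mat_mult (msc c A) B i j = msc c (mat_mult A B) i j" .
qed

lemma mm_unit: "mat_mult (mat_unit p q) B = (\<lambda>i j. if i = p then B q j else 0)"
proof (intro ext)
  fix i j
  have "{l. (mat_unit p q::'a mat) i l \<noteq> 0} = (if i = p then {q} else {})" by (auto simp: mat_unit_def)
  then show "mat_mult (mat_unit p q) B i j = (if i = p then B q j else 0)"
    by (simp add: mat_mult_def mat_unit_def)
qed



lemma N_memI: "finite {(i, j). A i j \<noteq> 0} \<Longrightarrow> (\<And>i j. i \<le> j \<Longrightarrow> A i j = 0) \<Longrightarrow> A \<in> N_set"
  by (simp add: N_set_def)

lemma N_fin: "A \<in> N_set \<Longrightarrow> finite {(i, j). A i j \<noteq> 0}" by (simp add: N_set_def)
lemma N_low: "A \<in> N_set \<Longrightarrow> i \<le> j \<Longrightarrow> A i j = 0" by (simp add: N_set_def)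

lemma N_row_finite: assumes "A \<in> N_set" shows "row_finite A"
  unfolding row_finite_def
proof
  fix i
  have "{j. A i j \<noteq> 0} \<subseteq> snd ` {(i, j). A i j \<noteq> 0}"
  proof
    fix j assume "j \<in> {j. A i j \<noteq> 0}"
    then have "(i,j) \<in> {(i, j). A i j \<noteq> 0}" by simp
    then show "j \<in> snd ` {(i, j). A i j \<noteq> 0}" by (rule rev_image_eqI) simp
  qed
  then show "finite {j. A i j \<noteq> 0}" using N_fin[OF assms] finite_subset by blast
qed

lemma N_zero: "(\<lambda>i j. 0) \<in> N_set" by (rule N_memI) auto

lemma N_add: assumes "A \<in> N_set" "B \<in> N_set" shows "madd A B \<in> N_set"
proof (rule N_memI)
  have "{(i, j). madd A B i j \<noteq> 0} \<subseteq> {(i, j). A i j \<noteq> 0} \<union> {(i, j). B i j \<noteq> 0}"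
    by (auto simp: madd_def)
  then show "finite {(i, j). madd A B i j \<noteq> 0}" using N_fin[OF assms(1)] N_fin[OF assms(2)]
    by (meson finite_UnI finite_subset)
qed (use assms in \<open>auto simp: madd_def N_low\<close>)

lemma N_sc: assumes "A \<in> N_set" shows "msc c A \<in> N_set"
proof (rule N_memI)
  have "{(i, j). msc c A i j \<noteq> 0} \<subseteq> {(i, j). A i j \<noteq> 0}" by (auto simp: msc_def)
  then show "finite {(i, j). msc c A i j \<noteq> 0}" using N_fin[OF assms] finite_subset by blast
qed (use assms in \<open>auto simp: msc_def N_low\<close>)

lemma N_mult: assumes "A \<in> N_set" "B \<in> N_set" shows "mat_mult A B \<in> N_set"
proof (rule N_memI)
  have "{(i, j). mat_mult A B i j \<noteq> 0} \<subseteq> fst ` {(i, j). A i j \<noteq> 0} \<times> snd ` {(i, j). B i j \<noteq> 0}"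
  proof
    fix x assume "x \<in> {(i, j). mat_mult A B i j \<noteq> 0}"
    then obtain i j where x: "x = (i,j)" "mat_mult A B i j \<noteq> 0" by auto
    then obtain l where "A i l \<noteq> 0" "B l j \<noteq> 0" using mm_nz by blast
    then have "(i,l) \<in> {(i, j). A i j \<noteq> 0}" "(l,j) \<in> {(i, j). B i j \<noteq> 0}" by simp_all
    then have "i \<in> fst ` {(i, j). A i j \<noteq> 0}" "j \<in> snd ` {(i, j). B i j \<noteq> 0}"
      by (auto intro: rev_image_eqI)
    then show "x \<in> fst ` {(i, j). A i j \<noteq> 0} \<times> snd ` {(i, j). B i j \<noteq> 0}"
      using x by simp
  qed
  then show "finite {(i, j). mat_mult A B i j \<noteq> 0}" using N_fin[OF assms(1)] N_fin[OF assms(2)]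
    by (meson finite_SigmaI finite_imageI finite_subset)
next
  fix i j :: nat assume "i \<le> j"
  show "mat_mult A B i j = 0"
  proof (rule ccontr)
    assume "mat_mult A B i j \<noteq> 0"
    then obtain l where "A i l \<noteq> 0" "B l j \<noteq> 0" using mm_nz by blast
    then have "l < i" "j < l" using N_low[OF assms(1)] N_low[OF assms(2)] by (meson not_le)+
    then show False using \<open>i \<le> j\<close> by simp
  qed
qed

lemma R_carrier_iff: "X \<in> R_carrier \<longleftrightarrow> (\<exists>c A. A \<in> N_set \<and> X = madd (msc c mat_one) A)"
  unfolding R_carrier_def madd_def msc_def by blast

lemma R_row_finite: assumes "X \<in> R_carrier" shows "row_finite X"
proof -
  obtain c A where A: "A \<in> N_set" "X = madd (msc c mat_one) A" using assms R_carrier_iff by blast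
  show ?thesis unfolding row_finite_def
  proof
    fix i
    have "{j. X i j \<noteq> 0} \<subseteq> insert i {j. A i j \<noteq> 0}" by (auto simp: A madd_def msc_def mat_one_def)
    then show "finite {j. X i j \<noteq> 0}" using N_row_finite[OF A(1)] unfolding row_finite_def
      by (meson finite_insert finite_subset)
  qed
qed

lemma one_rf: "row_finite (mat_one :: 'k::field mat)"
proof -
  have "\<And>i. {j. (mat_one :: 'k mat) i j \<noteq> 0} = {i}" by (auto simp: mat_one_def)
  then show ?thesis unfolding row_finite_def by simp
qed

lemma sc_one_rf: "row_finite (msc c (mat_one :: 'k::field mat))"
proof -
  have "\<And>i. {j. msc c (mat_one :: 'k mat) i j \<noteq> 0} \<subseteq> {i}" by (auto simp: msc_def mat_one_def)
  then show ?thesis unfolding row_finite_def by (meson finite.emptyI finite_insert finite_subset)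
qed

lemma R_mult:
  assumes "X \<in> R_carrier" "Y \<in> R_carrier" shows "mat_mult X Y \<in> R_carrier"
proof -
  obtain c A where A: "A \<in> N_set" "X = madd (msc c mat_one) A" using assms R_carrier_iff by blast
  obtain d B where B: "B \<in> N_set" "Y = madd (msc d mat_one) B" using assms R_carrier_iff by blast
  have "mat_mult X Y = madd (mat_mult (msc c mat_one) Y) (mat_mult A Y)"
    unfolding A(2) by (rule mm_ladd[OF sc_one_rf N_row_finite[OF A(1)]])
  also have "\<dots> = madd (msc c Y) (madd (msc d A) (mat_mult A B))"
  proof -
    have 1: "mat_mult (msc c mat_one) Y = msc c Y" by (simp add: mm_lsc one_rf mm_one_left)
    have 2: "mat_mult A Y = madd (msc d A) (mat_mult A B)"
      by (simp add: B(2) mm_radd mm_rsc mm_one_right N_row_finite[OF A(1)])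
    show ?thesis by (simp only: 1 2)
  qed
  also have "\<dots> = madd (msc (c*d) mat_one) (madd (madd (msc c B) (msc d A)) (mat_mult A B))"
    unfolding B(2) madd_def msc_def by (intro ext) (simp add: algebra_simps)
  finally have eq: "mat_mult X Y = madd (msc (c*d) mat_one) (madd (madd (msc c B) (msc d A)) (mat_mult A B))" .
  have "madd (madd (msc c B) (msc d A)) (mat_mult A B) \<in> N_set"
    by (intro N_add N_sc N_mult A(1) B(1))
  with eq show ?thesis unfolding R_carrier_iff by blast
qed

lemma N_sub_R: "A \<in> N_set \<Longrightarrow> A \<in> R_carrier"
proof -
  assume "A \<in> N_set"
  moreover have "A = madd (msc 0 mat_one) A" by (simp add: madd_def msc_def)
  ultimately show ?thesis unfolding R_carrier_iff by blast
qed

lemma R_simps [simp]: "carrier R_ring = R_carrier" "mult R_ring = mat_mult" "one R_ring = mat_one"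
  "zero R_ring = (\<lambda>i j. 0)" "add R_ring = madd"
  by (auto simp: R_ring_def komega_def madd_def[abs_def])

lemma R_ring: "ring (R_ring :: 'k::field mat ring)"
proof (rule ringI)
  show "abelian_group (R_ring :: 'k mat ring)"
  proof (rule abelian_groupI, simp_all)
    fix x y :: "'k mat" assume "x \<in> R_carrier" "y \<in> R_carrier"
    then obtain c A d B where AB: "A \<in> N_set" "x = madd (msc c mat_one) A" "B \<in> N_set" "y = madd (msc d mat_one) B"
      using R_carrier_iff by metis
    then have "madd x y = madd (msc (c+d) mat_one) (madd A B)"
      by (auto simp: madd_def msc_def algebra_simps)
    then show "madd x y \<in> R_carrier" unfolding R_carrier_iff using N_add AB by blast
  next
    show "(\<lambda>i j. 0::'k) \<in> R_carrier" using N_sub_R N_zero by blast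
  next
    fix x y z :: "'k mat"
    show "madd (madd x y) z = madd x (madd y z)" by (auto simp: madd_def algebra_simps)
    show "madd x y = madd y x" by (auto simp: madd_def algebra_simps)
    show "madd (\<lambda>i j. 0) x = x" by (auto simp: madd_def)
  next
    fix x :: "'k mat" assume "x \<in> R_carrier"
    then obtain c A where "A \<in> N_set" "x = madd (msc c mat_one) A" using R_carrier_iff by metis
    note cA = this
    have "madd (msc (-c) mat_one) (msc (-1) A) \<in> R_carrier" using N_sc cA R_carrier_iff by blast
    moreover have "madd (madd (msc (-c) mat_one) (msc (-1) A)) x = (\<lambda>i j. 0)"
      unfolding cA(2) madd_def msc_def by (intro ext) (simp add: algebra_simps)
    ultimately show "\<exists>y\<in>R_carrier. madd y x = (\<lambda>i j. 0)" by blast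
  qed
next
  show "monoid (R_ring :: 'k mat ring)"
  proof (rule monoidI, simp_all add: R_mult)
    have "(mat_one :: 'k mat) = madd (msc 1 mat_one) (\<lambda>i j. 0)" by (simp add: madd_def msc_def)
    then show "mat_one \<in> (R_carrier :: 'k mat set)" unfolding R_carrier_iff using N_zero by blast
  next
    fix x y z :: "'k mat" assume "x \<in> R_carrier" "y \<in> R_carrier" "z \<in> R_carrier"
    then show "mat_mult (mat_mult x y) z = mat_mult x (mat_mult y z)"
      by (simp add: mm_assoc R_row_finite)
  next
    fix x :: "'k mat" assume "x \<in> R_carrier"
    then show "mat_mult mat_one x = x" "mat_mult x mat_one = x"
      by (simp_all add: mm_one_left mm_one_right R_row_finite)
  qed
next
  fix x y z :: "'k mat" assume "x \<in> carrier R_ring" "y \<in> carrier R_ring" "z \<in> carrier R_ring"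
  then show "(x \<oplus>\<^bsub>R_ring\<^esub> y) \<otimes>\<^bsub>R_ring\<^esub> z = x \<otimes>\<^bsub>R_ring\<^esub> z \<oplus>\<^bsub>R_ring\<^esub> y \<otimes>\<^bsub>R_ring\<^esub> z"
    by (simp add: mm_ladd R_row_finite)
  show "z \<otimes>\<^bsub>R_ring\<^esub> (x \<oplus>\<^bsub>R_ring\<^esub> y) = z \<otimes>\<^bsub>R_ring\<^esub> x \<oplus>\<^bsub>R_ring\<^esub> z \<otimes>\<^bsub>R_ring\<^esub> y"
    by (simp add: mm_radd)
qed



fun geo :: "('a, 'b) ring_scheme \<Rightarrow> 'a \<Rightarrow> nat \<Rightarrow> 'a" where
  "geo R b 0 = \<zero>\<^bsub>R\<^esub>"
| "geo R b (Suc m) = geo R b m \<oplus>\<^bsub>R\<^esub> (b [^]\<^bsub>R\<^esub> m)"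

lemma (in ring) geo_closed: "b \<in> carrier R \<Longrightarrow> geo R b m \<in> carrier R"
  by (induction m) auto

lemma (in ring) geo_l: "b \<in> carrier R \<Longrightarrow> geo R b m \<otimes> (\<one> \<ominus> b) = \<one> \<ominus> b [^] m"
proof (induction m)
  case 0 then show ?case by (simp add: a_minus_def r_neg)
next
  case (Suc m)
  have p: "b [^] m \<in> carrier R" using Suc by simp
  have g: "geo R b m \<in> carrier R" using Suc geo_closed by simp
  have "geo R b (Suc m) \<otimes> (\<one> \<ominus> b) = geo R b m \<otimes> (\<one> \<ominus> b) \<oplus> b [^] m \<otimes> (\<one> \<ominus> b)"
    using p g Suc.prems by (simp add: l_distr)
  also have "\<dots> = \<one> \<ominus> b [^] m \<oplus> b [^] m \<otimes> (\<one> \<ominus> b)" using Suc by simp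
  also have "\<dots> = \<one> \<ominus> b [^] m \<otimes> b" using p Suc.prems
    by (simp add: a_minus_def a_assoc r_distr r_minus r_neg1)
  finally show ?case by simp
qed

lemma (in ring) pow_comm: "b \<in> carrier R \<Longrightarrow> b \<otimes> b [^] (m::nat) = b [^] m \<otimes> b"
  using nat_pow_Suc2[of b m] by simp

lemma (in ring) geo_r: "b \<in> carrier R \<Longrightarrow> (\<one> \<ominus> b) \<otimes> geo R b m = \<one> \<ominus> b [^] m"
proof (induction m)
  case 0 then show ?case by (simp add: a_minus_def r_neg)
next
  case (Suc m)
  have p: "b [^] m \<in> carrier R" using Suc by simp
  have g: "geo R b m \<in> carrier R" using Suc geo_closed by simp
  have c: "b \<otimes> b [^] m = b [^] m \<otimes> b" using pow_comm Suc.prems by blast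
  have "(\<one> \<ominus> b) \<otimes> geo R b (Suc m) = (\<one> \<ominus> b) \<otimes> geo R b m \<oplus> (\<one> \<ominus> b) \<otimes> b [^] m"
    using p g Suc.prems by (simp add: r_distr)
  also have "\<dots> = \<one> \<ominus> b [^] m \<oplus> (\<one> \<ominus> b) \<otimes> b [^] m" using Suc by simp
  also have "\<dots> = \<one> \<ominus> b \<otimes> b [^] m" using p Suc.prems
    by (simp add: a_minus_def a_assoc l_distr l_minus r_neg1)
  finally show ?case using c by simp
qed

lemma (in ring) nilpotent_unit:
  assumes "b \<in> carrier R" "b [^] (n::nat) = \<zero>"
  shows "\<one> \<ominus> b \<in> Units R"
proof -
  have "geo R b n \<otimes> (\<one> \<ominus> b) = \<one>" "(\<one> \<ominus> b) \<otimes> geo R b n = \<one>"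
    using geo_l[OF assms(1), of n] geo_r[OF assms(1), of n] assms by (simp_all add: a_minus_def)
  moreover have "\<one> \<ominus> b \<in> carrier R" using assms by simp
  ultimately show ?thesis unfolding Units_def using geo_closed[OF assms(1), of n] by blast
qed

lemma R_minus: assumes "X \<in> R_carrier" shows "\<ominus>\<^bsub>R_ring\<^esub> X = msc (-1) X"
proof -
  interpret ring R_ring by (rule R_ring)
  obtain c A where A: "A \<in> N_set" "X = madd (msc c mat_one) A" using assms R_carrier_iff by blast
  have "msc (-1) X = madd (msc (-c) mat_one) (msc (-1) A)"
    unfolding A(2) madd_def msc_def by (intro ext) simp
  then have c: "msc (-1) X \<in> R_carrier" using N_sc[OF A(1)] R_carrier_iff by blast
  have "msc (-1) X \<oplus>\<^bsub>R_ring\<^esub> X = \<zero>\<^bsub>R_ring\<^esub>"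
    by (simp add: madd_def msc_def)
  then show ?thesis using minus_equality assms c by simp
qed

lemma N_l_closed: assumes "A \<in> N_set" "X \<in> R_carrier" shows "mat_mult X A \<in> N_set"
proof -
  obtain c B where B: "B \<in> N_set" "X = madd (msc c mat_one) B" using assms R_carrier_iff by blast
  have "mat_mult X A = madd (mat_mult (msc c mat_one) A) (mat_mult B A)"
    unfolding B(2) by (rule mm_ladd[OF sc_one_rf N_row_finite[OF B(1)]])
  also have "\<dots> = madd (msc c A) (mat_mult B A)" by (simp add: mm_lsc one_rf mm_one_left)
  finally have eq: "mat_mult X A = madd (msc c A) (mat_mult B A)" .
  have "madd (msc c A) (mat_mult B A) \<in> N_set" by (intro N_add N_sc N_mult assms(1) B(1))
  then show ?thesis using eq by simp
qed

lemma N_r_closed: assumes "A \<in> N_set" "X \<in> R_carrier" shows "mat_mult A X \<in> N_set"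
proof -
  obtain c B where B: "B \<in> N_set" "X = madd (msc c mat_one) B" using assms R_carrier_iff by blast
  have "mat_mult A X = madd (msc c A) (mat_mult A B)"
    unfolding B(2) by (simp add: mm_radd mm_rsc mm_one_right N_row_finite[OF assms(1)])
  moreover have "madd (msc c A) (mat_mult A B) \<in> N_set" by (intro N_add N_sc N_mult assms(1) B(1))
  ultimately show ?thesis by simp
qed

lemma N_ideal: "ideal N_set (R_ring :: 'k::field mat ring)"
proof -
  interpret ring "R_ring :: 'k mat ring" by (rule R_ring)
  show ?thesis
  proof (rule idealI)
    show "ring (R_ring :: 'k mat ring)" by (rule R_ring)
    show "subgroup N_set (add_monoid (R_ring :: 'k mat ring))"
    proof (rule add.subgroupI)
      show "N_set \<subseteq> carrier (R_ring :: 'k mat ring)" using N_sub_R by auto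
      show "N_set \<noteq> {}" using N_zero by blast
    next
      fix a :: "'k mat" assume "a \<in> N_set"
      then show "\<ominus>\<^bsub>R_ring\<^esub> a \<in> N_set"
        unfolding R_minus[OF N_sub_R[OF \<open>a \<in> N_set\<close>]] by (rule N_sc)
    next
      fix a b :: "'k mat" assume "a \<in> N_set" "b \<in> N_set"
      then show "a \<oplus>\<^bsub>R_ring\<^esub> b \<in> N_set" using N_add by simp
    qed
  next
    fix a x :: "'k mat" assume "a \<in> N_set" "x \<in> carrier R_ring"
    then show "x \<otimes>\<^bsub>R_ring\<^esub> a \<in> N_set" "a \<otimes>\<^bsub>R_ring\<^esub> x \<in> N_set"
      using N_l_closed N_r_closed by simp_all
  qed
qed

lemma one_notin_N: "(mat_one :: 'k::field mat) \<notin> N_set"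
proof
  assume "(mat_one :: 'k mat) \<in> N_set"
  then have "(mat_one :: 'k mat) 0 0 = 0" by (rule N_low) simp
  then show False by (simp add: mat_one_def)
qed

lemma lprod_N:
  assumes a: "\<forall>n. a n \<in> N_set"
  shows "\<exists>n\<ge>1. lprod (R_ring :: 'k::field mat ring) a n = (\<lambda>i j. 0)"
proof -
  have "finite (fst ` {(i, j). a 0 i j \<noteq> 0})" using N_fin a by blast
  then obtain M where M: "\<forall>x\<in>fst ` {(i, j). a 0 i j \<noteq> 0}. x < M" using finite_nat_set_iff_bounded by blast
  have Mb: "a 0 i j \<noteq> 0 \<Longrightarrow> i < M" for i j
  proof -
    assume "a 0 i j \<noteq> 0"
    then have "(i,j) \<in> {(i, j). a 0 i j \<noteq> 0}" by simp
    then have "i \<in> fst ` {(i, j). a 0 i j \<noteq> 0}" by (rule rev_image_eqI) simp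
    then show "i < M" using M by auto
  qed
  have claim: "\<forall>i j. lprod (R_ring :: 'k mat ring) a (Suc n) i j \<noteq> 0 \<longrightarrow> j + Suc n \<le> i \<and> i < M" for n
  proof (induction n)
    case 0
    have "lprod (R_ring :: 'k mat ring) a (Suc 0) = a 0" by (simp add: mm_one_left)
    moreover have "a 0 i j \<noteq> 0 \<Longrightarrow> j + Suc 0 \<le> i" for i j
      using N_low[of "a 0" i j] a by (cases "i \<le> j") auto
    ultimately show ?case using Mb by simp
  next
    case (Suc n)
    show ?case
    proof (intro allI impI)
      fix i j assume "lprod (R_ring :: 'k mat ring) a (Suc (Suc n)) i j \<noteq> 0"
      then have "mat_mult (lprod (R_ring :: 'k mat ring) a (Suc n)) (a (Suc n)) i j \<noteq> 0" by simp
      then obtain l where l: "lprod (R_ring :: 'k mat ring) a (Suc n) i l \<noteq> 0" "a (Suc n) l j \<noteq> 0"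
        using mm_nz by blast
      have "j < l" using N_low[of "a (Suc n)" l j] a l(2) by (meson not_le)
      then show "j + Suc (Suc n) \<le> i \<and> i < M" using Suc l(1) by fastforce
    qed
  qed
  have "lprod (R_ring :: 'k mat ring) a (Suc M) = (\<lambda>i j. 0)"
  proof (intro ext)
    fix i j show "lprod (R_ring :: 'k mat ring) a (Suc M) i j = 0"
      using claim[of M] by fastforce
  qed
  then show ?thesis by (intro exI[of _ "Suc M"]) simp
qed

lemma lprod_pow: "lprod (R_ring :: 'k::field mat ring) (\<lambda>_. B) n = B [^]\<^bsub>R_ring\<^esub> n"
  by (induction n) simp_all

lemma N_nilpotent: assumes "B \<in> N_set" shows "\<exists>n::nat. B [^]\<^bsub>(R_ring :: 'k::field mat ring)\<^esub> n = (\<lambda>i j. 0)"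
proof -
  obtain n where "lprod (R_ring :: 'k::field mat ring) (\<lambda>_. B) n = (\<lambda>i j. 0)"
    using lprod_N[of "\<lambda>_. B"] assms by blast
  then show ?thesis unfolding lprod_pow by blast
qed

lemma msc_msc: "msc a (msc b A) = msc (a*b) A" by (simp add: msc_def mult.assoc)
lemma msc_1: "msc 1 A = A" by (simp add: msc_def)

lemma sc_one_R: "msc c (mat_one :: 'k::field mat) \<in> R_carrier"
proof -
  have "msc c (mat_one :: 'k mat) = madd (msc c mat_one) (\<lambda>i j. 0)" by (simp add: madd_def)
  then show ?thesis unfolding R_carrier_iff using N_zero by blast
qed

lemma R_unit: assumes "X \<in> R_carrier" "X \<notin> N_set" shows "X \<in> Units (R_ring :: 'k::field mat ring)"
proof -
  interpret ring "R_ring :: 'k mat ring" by (rule R_ring)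
  interpret N: ideal N_set "R_ring :: 'k mat ring" by (rule N_ideal)
  obtain c A where A: "A \<in> N_set" "X = madd (msc c mat_one) A" using assms R_carrier_iff by blast
  have c0: "c \<noteq> 0"
  proof
    assume "c = 0"
    then have "X = A" unfolding A(2) madd_def msc_def by simp
    then show False using A(1) assms(2) by simp
  qed
  define A' where "A' = msc (1/c) A"
  have A'N: "A' \<in> N_set" unfolding A'_def using N_sc A(1) by blast
  have bN: "\<ominus>\<^bsub>R_ring\<^esub> A' \<in> N_set" using A'N by (rule N.a_inv_closed)
  obtain n :: nat where n: "(\<ominus>\<^bsub>R_ring\<^esub> A') [^]\<^bsub>R_ring\<^esub> n = (\<lambda>i j. 0)" using N_nilpotent[OF bN] by blast
  have u1: "\<one>\<^bsub>R_ring\<^esub> \<ominus>\<^bsub>R_ring\<^esub> (\<ominus>\<^bsub>R_ring\<^esub> A') \<in> Units R_ring"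
    by (rule nilpotent_unit[of _ n]) (use bN N_sub_R n in simp_all)
  have A'c: "A' \<in> carrier R_ring" using A'N N_sub_R by simp
  have e1: "\<one>\<^bsub>R_ring\<^esub> \<ominus>\<^bsub>R_ring\<^esub> (\<ominus>\<^bsub>R_ring\<^esub> A') = madd mat_one A'"
    using A'c by (simp add: a_minus_def minus_minus)
  have cR: "msc c mat_one \<in> R_carrier" "msc (1/c) mat_one \<in> R_carrier"
    by (rule sc_one_R)+
  have "mat_mult (msc c mat_one) (msc (1/c) mat_one) = mat_one"
       "mat_mult (msc (1/c) mat_one) (msc c mat_one) = mat_one"
    using c0 by (simp_all add: mm_rsc mm_lsc one_rf mm_one_left msc_msc msc_1)
  then have u2: "msc c mat_one \<in> Units (R_ring :: 'k mat ring)"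
    unfolding Units_def using cR by auto
  have "mat_mult (msc c mat_one) (madd mat_one A') = msc c (madd mat_one A')"
    by (simp add: mm_lsc one_rf mm_one_left)
  also have "\<dots> = X" unfolding A(2) A'_def msc_def madd_def using c0
    by (intro ext) (simp add: algebra_simps)
  finally have "X = mat_mult (msc c mat_one) (madd mat_one A')" by simp
  then have "X = msc c mat_one \<otimes>\<^bsub>R_ring\<^esub> (\<one>\<^bsub>R_ring\<^esub> \<ominus>\<^bsub>R_ring\<^esub> (\<ominus>\<^bsub>R_ring\<^esub> A'))"
    using e1 by simp
  then show ?thesis using Units_m_closed[OF u2 u1] by simp
qed

lemma proper_ideal_sub_N:
  assumes "ideal I (R_ring :: 'k::field mat ring)" "I \<noteq> carrier R_ring"
  shows "I \<subseteq> N_set"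
proof
  interpret ring "R_ring :: 'k mat ring" by (rule R_ring)
  interpret I: ideal I "R_ring :: 'k mat ring" by (rule assms(1))
  fix x assume x: "x \<in> I"
  show "x \<in> N_set"
  proof (rule ccontr)
    assume "x \<notin> N_set"
    then have u: "x \<in> Units R_ring" using R_unit I.Icarr[OF x] by simp
    then have "inv\<^bsub>R_ring\<^esub> x \<otimes>\<^bsub>R_ring\<^esub> x \<in> I" using I.I_l_closed[OF x Units_inv_closed[OF u]] by simp
    then have "\<one>\<^bsub>R_ring\<^esub> \<in> I" using Units_l_inv[OF u] by simp
    then show False using I.one_imp_carrier assms(2) by blast
  qed
qed



lemma quot_carrier_E: "x \<in> carrier (R Quot I) \<Longrightarrow> \<exists>z\<in>carrier R. x = I +>\<^bsub>R\<^esub> z"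
  by (auto simp: FactRing_def A_RCOSETS_def')

lemma quot_carrier_I: "z \<in> carrier R \<Longrightarrow> I +>\<^bsub>R\<^esub> z \<in> carrier (R Quot I)"
  by (auto simp: FactRing_def A_RCOSETS_def')

lemma quot_mult: "ideal I R \<Longrightarrow> x \<in> carrier R \<Longrightarrow> y \<in> carrier R \<Longrightarrow>
   (I +>\<^bsub>R\<^esub> x) \<otimes>\<^bsub>R Quot I\<^esub> (I +>\<^bsub>R\<^esub> y) = I +>\<^bsub>R\<^esub> (x \<otimes>\<^bsub>R\<^esub> y)"
  by (simp add: FactRing_def ideal.rcoset_mult_add)

lemma quot_one: "\<one>\<^bsub>R Quot I\<^esub> = I +>\<^bsub>R\<^esub> \<one>\<^bsub>R\<^esub>" by (simp add: FactRing_def)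
lemma quot_zero: "\<zero>\<^bsub>R Quot I\<^esub> = I" by (simp add: FactRing_def)

lemma ideal_left_ideal: assumes "ideal M S" shows "left_ideal S M"
  unfolding left_ideal_def
proof (intro conjI ballI)
  show "additive_subgroup M S" by (rule ideal.axioms(1)[OF assms])
  fix r x assume "r \<in> carrier S" "x \<in> M"
  then show "r \<otimes>\<^bsub>S\<^esub> x \<in> M" by (rule ideal.I_l_closed[OF assms, rotated])
qed

lemma left_ideal_sub: "left_ideal S L \<Longrightarrow> L \<subseteq> carrier S"
  unfolding left_ideal_def by (simp add: additive_subgroup.a_subset)

lemma left_ideal_unit:
  assumes "ring S" "left_ideal S L" "x \<in> L" "x \<in> Units S"
  shows "L = carrier S"
proof -
  interpret ring S by fact
  have ix: "inv\<^bsub>S\<^esub> x \<in> carrier S" using assms(4) by simp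
  have "inv\<^bsub>S\<^esub> x \<otimes>\<^bsub>S\<^esub> x \<in> L" using assms(2) ix assms(3) unfolding left_ideal_def by blast
  moreover have "inv\<^bsub>S\<^esub> x \<otimes>\<^bsub>S\<^esub> x = \<one>\<^bsub>S\<^esub>" using assms(4) by (rule Units_l_inv)
  ultimately have one: "\<one>\<^bsub>S\<^esub> \<in> L" by simp
  have "carrier S \<subseteq> L"
  proof
    fix r assume r: "r \<in> carrier S"
    then have "r \<otimes>\<^bsub>S\<^esub> \<one>\<^bsub>S\<^esub> \<in> L" using one assms(2) unfolding left_ideal_def by blast
    then show "r \<in> L" using r by simp
  qed
  then show ?thesis using left_ideal_sub[OF assms(2)] by (rule subset_antisym[rotated])
qed

lemma local_proper:
  assumes "ring S" "\<forall>x\<in>carrier S. x \<notin> M \<longrightarrow> x \<in> Units S" "left_ideal S L" "L \<noteq> carrier S"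
  shows "L \<subseteq> M"
proof
  fix x assume x: "x \<in> L"
  show "x \<in> M"
  proof (rule ccontr)
    assume "x \<notin> M"
    then have "x \<in> Units S" using assms(2) left_ideal_sub[OF assms(3)] x by blast
    then show False using left_ideal_unit[OF assms(1,3) x] assms(4) by blast
  qed
qed

lemma local_jac:
  assumes S: "ring S" and M: "ideal M S" and one: "\<one>\<^bsub>S\<^esub> \<notin> M"
    and U: "\<forall>x\<in>carrier S. x \<notin> M \<longrightarrow> x \<in> Units S"
  shows "jacobson_radical S = M"
proof -
  interpret ring S by fact
  have MC: "M \<noteq> carrier S" using one one_closed by blast
  have LM: "left_ideal S M" by (rule ideal_left_ideal[OF M])
  have maxM: "maximal_left_ideal S M"
    unfolding maximal_left_ideal_def
  proof (intro conjI allI impI LM MC)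
    fix L' assume H: "left_ideal S L' \<and> M \<subseteq> L' \<and> L' \<noteq> carrier S"
    then have "L' \<subseteq> M" using local_proper[OF S U, of L'] by simp
    moreover have "M \<subseteq> L'" using H by simp
    ultimately show "L' = M" by (rule subset_antisym)
  qed
  have eqM: "L = M" if "maximal_left_ideal S L" for L
  proof -
    have "left_ideal S L" "L \<noteq> carrier S" using that unfolding maximal_left_ideal_def by simp_all
    then have "L \<subseteq> M" using local_proper[OF S U] by simp
    moreover have "\<forall>L'. left_ideal S L' \<and> L \<subseteq> L' \<and> L' \<noteq> carrier S \<longrightarrow> L' = L"
      using that unfolding maximal_left_ideal_def by simp
    ultimately have "M = L" using LM MC by simp
    then show "L = M" by simp
  qed
  have "{L. maximal_left_ideal S L} = {M}"
  proof
    show "{L. maximal_left_ideal S L} \<subseteq> {M}" using eqM by blast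
    show "{M} \<subseteq> {L. maximal_left_ideal S L}" using maxM by simp
  qed
  then show ?thesis unfolding jacobson_radical_def using left_ideal_sub[OF LM] by (simp add: Int_absorb1)
qed

lemma local_artinian:
  assumes S: "ring S" and M: "ideal M S"
    and U: "\<forall>x\<in>carrier S. x \<notin> M \<longrightarrow> x \<in> Units S"
  shows "left_artinian (S Quot M)"
proof -
  interpret ring S by fact
  interpret M: ideal M S by fact
  let ?T = "S Quot M"
  have T: "ring ?T" by (rule M.quotient_is_ring)
  have hom: "(+>\<^bsub>S\<^esub>) M \<in> ring_hom S ?T" by (rule M.rcos_ring_hom)
  have dich: "L = {\<zero>\<^bsub>?T\<^esub>} \<or> L = carrier ?T" if L: "left_ideal ?T L" for L
  proof (cases "\<exists>X\<in>L. X \<noteq> \<zero>\<^bsub>?T\<^esub>")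
    case True
    then obtain X where X: "X \<in> L" "X \<noteq> \<zero>\<^bsub>?T\<^esub>" by blast
    then have "X \<in> carrier ?T" using left_ideal_sub[OF L] by blast
    then obtain y where y: "y \<in> carrier S" "X = M +>\<^bsub>S\<^esub> y" using quot_carrier_E by blast
    have "y \<notin> M"
    proof
      assume "y \<in> M"
      then have "M +>\<^bsub>S\<^esub> y = M" by (rule M.a_rcos_const)
      then show False using X(2) y(2) by (simp add: quot_zero)
    qed
    then have yu: "y \<in> Units S" using U y by blast
    have iy: "inv\<^bsub>S\<^esub> y \<in> carrier S" using yu by simp
    have "(M +>\<^bsub>S\<^esub> (inv\<^bsub>S\<^esub> y)) \<otimes>\<^bsub>?T\<^esub> X = M +>\<^bsub>S\<^esub> (inv\<^bsub>S\<^esub> y \<otimes>\<^bsub>S\<^esub> y)"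
      using quot_mult[OF M iy y(1)] y by simp
    also have "\<dots> = \<one>\<^bsub>?T\<^esub>" using yu by (simp add: quot_one)
    finally have eq: "(M +>\<^bsub>S\<^esub> (inv\<^bsub>S\<^esub> y)) \<otimes>\<^bsub>?T\<^esub> X = \<one>\<^bsub>?T\<^esub>" .
    have XU: "X \<in> Units ?T"
    proof -
      have "X \<otimes>\<^bsub>?T\<^esub> (M +>\<^bsub>S\<^esub> (inv\<^bsub>S\<^esub> y)) = M +>\<^bsub>S\<^esub> (y \<otimes>\<^bsub>S\<^esub> inv\<^bsub>S\<^esub> y)"
        using quot_mult[OF M y(1) iy] y by simp
      also have "\<dots> = \<one>\<^bsub>?T\<^esub>" using yu by (simp add: quot_one)
      finally have eq2: "X \<otimes>\<^bsub>?T\<^esub> (M +>\<^bsub>S\<^esub> (inv\<^bsub>S\<^esub> y)) = \<one>\<^bsub>?T\<^esub>" .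
      show ?thesis unfolding Units_def
        using eq eq2 quot_carrier_I[OF iy] \<open>X \<in> carrier ?T\<close> by auto
    qed
    show ?thesis using left_ideal_unit[OF T L X(1) XU] by blast
  next
    case False
    then have "L \<subseteq> {\<zero>\<^bsub>?T\<^esub>}" by blast
    moreover have "\<zero>\<^bsub>?T\<^esub> \<in> L" using L unfolding left_ideal_def
      by (simp add: additive_subgroup.zero_closed)
    ultimately show ?thesis by auto
  qed
  show ?thesis unfolding left_artinian_def
  proof (intro allI impI)
    fix f :: "nat \<Rightarrow> 'a set set"
    assume f: "\<forall>n. left_ideal ?T (f n) \<and> f (Suc n) \<subseteq> f n"
    have mono: "n \<le> n' \<Longrightarrow> f n' \<subseteq> f n" for n n'
      using lift_Suc_antimono_le[of f n n'] f by simp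
    have z: "\<zero>\<^bsub>?T\<^esub> \<in> f n" for n
      using f unfolding left_ideal_def by (simp add: additive_subgroup.zero_closed)
    show "\<exists>m. \<forall>n\<ge>m. f n = f m"
    proof (cases "\<exists>m. f m = {\<zero>\<^bsub>?T\<^esub>}")
      case True
      then obtain m where m: "f m = {\<zero>\<^bsub>?T\<^esub>}" by blast
      have "f n = f m" if "n \<ge> m" for n
      proof -
        have "f n \<subseteq> {\<zero>\<^bsub>?T\<^esub>}" using mono[OF that] m by simp
        then show ?thesis using m z[of n] by auto
      qed
      then show ?thesis by blast
    next
      case False
      have "f n = carrier ?T" for n
      proof -
        have "f n \<noteq> {\<zero>\<^bsub>?T\<^esub>}" using False by simp
        then show ?thesis using dich[of "f n"] f by simp
      qed
      then show ?thesis by simp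
    qed
  qed
qed



lemma quot_local:
  assumes I: "ideal I (R_ring :: 'k::field mat ring)" and IN: "I \<subseteq> N_set"
  shows "jacobson_radical (R_ring Quot I) = (+>\<^bsub>R_ring\<^esub>) I ` N_set"
    and "semilocal (R_ring Quot I)"
proof -
  interpret ring "R_ring :: 'k mat ring" by (rule R_ring)
  interpret I: ideal I "R_ring :: 'k mat ring" by (rule I)
  interpret N: ideal N_set "R_ring :: 'k mat ring" by (rule N_ideal)
  let ?S = "(R_ring :: 'k mat ring) Quot I"
  let ?M = "(+>\<^bsub>R_ring\<^esub>) I ` (N_set :: 'k mat set)"
  have S: "ring ?S" by (rule I.quotient_is_ring)
  have M: "ideal ?M ?S" by (rule ring_ideal_imp_quot_ideal[OF I N_ideal])
  have one: "\<one>\<^bsub>?S\<^esub> \<notin> ?M"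
  proof
    assume "\<one>\<^bsub>?S\<^esub> \<in> ?M"
    then obtain z where z: "z \<in> N_set" "I +>\<^bsub>R_ring\<^esub> mat_one = I +>\<^bsub>R_ring\<^esub> z"
      by (auto simp: quot_one)
    have zc: "z \<in> carrier R_ring" using z(1) N_sub_R by simp
    have "mat_one \<ominus>\<^bsub>R_ring\<^esub> z \<in> I"
      using quotient_eq_iff_same_a_r_cos[OF I, of mat_one z] zc z(2) one_closed by simp
    then have d: "mat_one \<ominus>\<^bsub>R_ring\<^esub> z \<in> N_set" using IN by blast
    have "(mat_one \<ominus>\<^bsub>R_ring\<^esub> z) \<oplus>\<^bsub>R_ring\<^esub> z = \<one>\<^bsub>R_ring\<^esub>"
      using zc one_closed by (simp del: R_simps add: a_minus_def a_assoc l_neg R_simps(3)[symmetric])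
    moreover have "(mat_one \<ominus>\<^bsub>R_ring\<^esub> z) \<oplus>\<^bsub>R_ring\<^esub> z \<in> N_set" using N.a_closed[OF d z(1)] .
    ultimately show False using one_notin_N[where 'k='k] by simp
  qed
  have U: "\<forall>x\<in>carrier ?S. x \<notin> ?M \<longrightarrow> x \<in> Units ?S"
  proof (intro ballI impI)
    fix x assume x: "x \<in> carrier ?S" "x \<notin> ?M"
    then obtain z where z: "z \<in> carrier R_ring" "x = I +>\<^bsub>R_ring\<^esub> z" using quot_carrier_E by blast
    have "z \<notin> N_set" using x(2) z(2) by blast
    then have zu: "z \<in> Units R_ring" using R_unit z(1) by simp
    have iz: "inv\<^bsub>R_ring\<^esub> z \<in> carrier R_ring" using zu by (rule Units_inv_closed)
    have e1: "(I +>\<^bsub>R_ring\<^esub> inv\<^bsub>R_ring\<^esub> z) \<otimes>\<^bsub>?S\<^esub> x = \<one>\<^bsub>?S\<^esub>"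
      using quot_mult[OF I iz z(1)] z(2) Units_l_inv[OF zu] by (simp add: quot_one)
    have e2: "x \<otimes>\<^bsub>?S\<^esub> (I +>\<^bsub>R_ring\<^esub> inv\<^bsub>R_ring\<^esub> z) = \<one>\<^bsub>?S\<^esub>"
      using quot_mult[OF I z(1) iz] z(2) Units_r_inv[OF zu] by (simp add: quot_one)
    show "x \<in> Units ?S" unfolding Units_def using e1 e2 x(1) quot_carrier_I[OF iz] by auto
  qed
  show J: "jacobson_radical ?S = ?M" by (rule local_jac[OF S M one U])
  show "semilocal ?S" unfolding semilocal_def J by (rule local_artinian[OF S M U])
qed



lemma lprod_closed: "ring R \<Longrightarrow> (\<forall>n. a n \<in> carrier R) \<Longrightarrow> lprod R a n \<in> carrier R"
  by (induction n) (simp_all add: ring.ring_simprules)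

lemma rprod_closed: "ring R \<Longrightarrow> (\<forall>n. a n \<in> carrier R) \<Longrightarrow> rprod R a n \<in> carrier R"
  by (induction n) (simp_all add: ring.ring_simprules)

lemma lprod_quot:
  assumes I: "ideal I R" and b: "\<forall>n. b n \<in> carrier R"
  shows "lprod (R Quot I) (\<lambda>n. I +>\<^bsub>R\<^esub> b n) n = I +>\<^bsub>R\<^esub> lprod R b n"
proof (induction n)
  case 0 then show ?case by (simp add: quot_one)
next
  case (Suc n)
  have R: "ring R" using I by (rule ideal.axioms(2))
  show ?case using Suc quot_mult[OF I lprod_closed[OF R b, of n] b[rule_format, of n]] by simp
qed

lemma rprod_quot:
  assumes I: "ideal I R" and b: "\<forall>n. b n \<in> carrier R"
  shows "rprod (R Quot I) (\<lambda>n. I +>\<^bsub>R\<^esub> b n) n = I +>\<^bsub>R\<^esub> rprod R b n"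
proof (induction n)
  case 0 then show ?case by (simp add: quot_one)
next
  case (Suc n)
  have R: "ring R" using I by (rule ideal.axioms(2))
  show ?case using Suc quot_mult[OF I b[rule_format, of n] rprod_closed[OF R b, of n]] by simp
qed

lemma left_part:
  assumes I: "ideal I (R_ring :: 'k::field mat ring)" and IC: "I \<noteq> carrier R_ring"
  shows "left_perfect (R_ring Quot I)"
proof -
  interpret I: ideal I "R_ring :: 'k mat ring" by (rule I)
  have IN: "I \<subseteq> N_set" by (rule proper_ideal_sub_N[OF I IC])
  have J: "jacobson_radical (R_ring Quot I) = (+>\<^bsub>R_ring\<^esub>) I ` N_set" by (rule quot_local(1)[OF I IN])
  have "left_T_nilpotent (R_ring Quot I) ((+>\<^bsub>R_ring\<^esub>) I ` N_set)"
    unfolding left_T_nilpotent_def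
  proof (intro allI impI)
    fix a :: "nat \<Rightarrow> 'k mat set" assume a: "\<forall>n. a n \<in> (+>\<^bsub>R_ring\<^esub>) I ` (N_set :: 'k mat set)"
    have "\<forall>n. \<exists>z. z \<in> N_set \<and> a n = I +>\<^bsub>R_ring\<^esub> z"
    proof
      fix n
      have "a n \<in> (+>\<^bsub>R_ring\<^esub>) I ` (N_set :: 'k mat set)" using a by simp
      then obtain z where "z \<in> N_set" "a n = I +>\<^bsub>R_ring\<^esub> z" by (rule imageE)
      then show "\<exists>z. z \<in> N_set \<and> a n = I +>\<^bsub>R_ring\<^esub> z" by blast
    qed
    from choice[OF this] obtain b :: "nat \<Rightarrow> 'k mat" where b: "\<forall>n. b n \<in> N_set \<and> a n = I +>\<^bsub>R_ring\<^esub> b n"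
      by blast
    have aeq: "a = (\<lambda>n. I +>\<^bsub>R_ring\<^esub> b n)" using b by auto
    have bN: "\<forall>n. b n \<in> N_set" using b by simp
    have bc: "\<forall>n. b n \<in> carrier R_ring" using bN by (simp add: N_sub_R)
    obtain n where n: "n \<ge> 1" "lprod (R_ring :: 'k mat ring) b n = (\<lambda>i j. 0)" using lprod_N[OF bN] by blast
    have "lprod (R_ring Quot I) a n = I +>\<^bsub>R_ring\<^esub> (\<lambda>i j. 0)"
      unfolding aeq lprod_quot[OF I bc] n(2) ..
    also have "\<dots> = I"
    proof -
      have "\<zero>\<^bsub>R_ring\<^esub> \<in> I" by (rule additive_subgroup.zero_closed[OF ideal.axioms(1)[OF I]])
      then show ?thesis using I.a_rcos_const by simp
    qed
    finally show "\<exists>n\<ge>1. lprod (R_ring Quot I) a n = \<zero>\<^bsub>R_ring Quot I\<^esub>" using n(1) by (auto simp: quot_zero)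
  qed
  then show ?thesis unfolding left_perfect_def J using quot_local(2)[OF I IN] by simp
qed

definition Jcol :: "'k::field mat set" where
  "Jcol = {A. A \<in> N_set \<and> (\<forall>i j. j \<noteq> 0 \<longrightarrow> A i j = 0)}"

lemma Jcol_ideal: "ideal Jcol (R_ring :: 'k::field mat ring)"
proof -
  interpret ring "R_ring :: 'k mat ring" by (rule R_ring)
  show ?thesis
  proof (rule idealI)
    show "ring (R_ring :: 'k mat ring)" by (rule R_ring)
    show "subgroup Jcol (add_monoid (R_ring :: 'k mat ring))"
    proof (rule add.subgroupI)
      show "Jcol \<subseteq> carrier (R_ring :: 'k mat ring)" using N_sub_R by (auto simp: Jcol_def)
      show "Jcol \<noteq> ({} :: 'k mat set)" using N_zero by (auto simp: Jcol_def)
    next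
      fix a :: "'k mat" assume a: "a \<in> Jcol"
      then have aN: "a \<in> N_set" by (simp add: Jcol_def)
      show "\<ominus>\<^bsub>R_ring\<^esub> a \<in> Jcol"
        unfolding R_minus[OF N_sub_R[OF aN]] using a N_sc[OF aN, of "-1"] by (auto simp: Jcol_def msc_def)
    next
      fix a b :: "'k mat" assume "a \<in> Jcol" "b \<in> Jcol"
      then show "a \<oplus>\<^bsub>R_ring\<^esub> b \<in> Jcol" using N_add by (auto simp: Jcol_def madd_def)
    qed
  next
    fix a x :: "'k mat" assume a: "a \<in> Jcol" and x: "x \<in> carrier R_ring"
    then have aN: "a \<in> N_set" and ac: "\<forall>i j. j \<noteq> 0 \<longrightarrow> a i j = 0" by (simp_all add: Jcol_def)
    have xR: "x \<in> R_carrier" using x by simp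
    have c1: "mat_mult x a i j = 0" if "j \<noteq> 0" for i j
    proof (rule ccontr)
      assume "mat_mult x a i j \<noteq> 0"
      then obtain l where "a l j \<noteq> 0" using mm_nz by blast
      then show False using ac that by simp
    qed
    obtain c B where B: "B \<in> N_set" "x = madd (msc c mat_one) B" using xR R_carrier_iff by blast
    have x0: "x 0 j = 0" if "j \<noteq> 0" for j
      using that N_low[OF B(1), of 0 j] by (simp add: B(2) madd_def msc_def mat_one_def)
    have c2: "mat_mult a x i j = 0" if "j \<noteq> 0" for i j
    proof (rule ccontr)
      assume "mat_mult a x i j \<noteq> 0"
      then obtain l where l: "a i l \<noteq> 0" "x l j \<noteq> 0" using mm_nz by blast
      then have "l = 0" using ac by blast
      then show False using l(2) x0 that by simp
    qed
    show "x \<otimes>\<^bsub>R_ring\<^esub> a \<in> Jcol" using N_l_closed[OF aN xR] c1 by (simp add: Jcol_def)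
    show "a \<otimes>\<^bsub>R_ring\<^esub> x \<in> Jcol" using N_r_closed[OF aN xR] c2 by (simp add: Jcol_def)
  qed
qed

lemma unit_N: "p > q \<Longrightarrow> (mat_unit p q :: 'k::field mat) \<in> N_set"
proof (rule N_memI)
  have "{(i, j). (mat_unit p q :: 'k mat) i j \<noteq> 0} = {(p,q)}" by (auto simp: mat_unit_def)
  then show "finite {(i, j). (mat_unit p q :: 'k mat) i j \<noteq> 0}" by simp
qed (auto simp: mat_unit_def)

lemma E10_J: "(mat_unit 1 0 :: 'k::field mat) \<in> Jcol"
  unfolding Jcol_def using unit_N[of 0 1] by (auto simp: mat_unit_def)

lemma rprod_units:
  "rprod (R_ring :: 'k::field mat ring) (\<lambda>n. mat_unit (n+2) (n+1)) (Suc n) = mat_unit (n+2) 1"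
proof (induction n)
  case 0
  show ?case by (simp add: mm_unit, intro ext) (simp add: mat_unit_def mat_one_def)
next
  case (Suc n)
  have "rprod (R_ring :: 'k mat ring) (\<lambda>n. mat_unit (n+2) (n+1)) (Suc (Suc n))
      = mat_mult (mat_unit (n+3) (n+2)) (mat_unit (n+2) 1)"
    using Suc by (simp add: numeral_3_eq_3)
  also have "\<dots> = mat_unit (n+3) 1" by (simp add: mm_unit, intro ext) (simp add: mat_unit_def)
  finally show ?case by (simp add: numeral_3_eq_3)
qed

theorem mainTheorem10:
  shows "left_almost_perfect (R_ring :: 'k::field mat ring)
       \<and> \<not> right_almost_perfect (R_ring :: 'k::field mat ring)
       \<and> \<not> right_perfect ((R_ring :: 'k::field mat ring) Quot
              (genideal (R_ring :: 'k::field mat ring) {mat_unit 1 0}))"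
proof -
  interpret ring "R_ring :: 'k mat ring" by (rule R_ring)
  let ?I = "genideal (R_ring :: 'k::field mat ring) {mat_unit 1 0}"
  have Ec: "(mat_unit 1 0 :: 'k mat) \<in> carrier R_ring" using unit_N[of 0 1] N_sub_R by simp
  have I: "ideal ?I R_ring" using genideal_ideal Ec by simp
  have EI: "mat_unit 1 0 \<in> ?I" using genideal_self' Ec by simp
  have IJ: "?I \<subseteq> Jcol" using genideal_minimal[OF Jcol_ideal[where 'k='k]] E10_J[where 'k='k] by simp
  have JN: "Jcol \<subseteq> (N_set :: 'k mat set)" by (auto simp: Jcol_def)
  have IN: "?I \<subseteq> N_set" using IJ JN by (rule subset_trans)
  have part1: "left_almost_perfect (R_ring :: 'k::field mat ring)"
    unfolding left_almost_perfect_def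
  proof (intro allI impI)
    fix J assume "ideal J (R_ring :: 'k mat ring) \<and> J \<noteq> {\<zero>\<^bsub>R_ring\<^esub>} \<and> J \<noteq> carrier R_ring"
    then show "left_perfect (R_ring Quot J)" by (intro left_part) simp_all
  qed
  have part3: "\<not> right_perfect ((R_ring :: 'k::field mat ring) Quot ?I)"
  proof
    assume "right_perfect ((R_ring :: 'k::field mat ring) Quot ?I)"
    then have rt: "right_T_nilpotent (R_ring Quot ?I) ((+>\<^bsub>R_ring\<^esub>) ?I ` N_set)"
      unfolding right_perfect_def quot_local(1)[OF I IN] by simp
    define e where "e = (\<lambda>n. (mat_unit (n+2) (n+1) :: 'k mat))"
    have eN: "\<forall>n. e n \<in> N_set" unfolding e_def using unit_N[where 'k='k] by simp
    have ec: "\<forall>n. e n \<in> carrier R_ring" using eN by (simp add: N_sub_R)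
    have mem: "\<forall>n. (\<lambda>n. ?I +>\<^bsub>R_ring\<^esub> e n) n \<in> (+>\<^bsub>R_ring\<^esub>) ?I ` N_set"
      using eN by simp
    have rt': "\<forall>a. (\<forall>n. a n \<in> (+>\<^bsub>R_ring\<^esub>) ?I ` N_set) \<longrightarrow> (\<exists>n\<ge>1. rprod (R_ring Quot ?I) a n = \<zero>\<^bsub>R_ring Quot ?I\<^esub>)"
      using rt unfolding right_T_nilpotent_def by simp
    obtain n where n: "n \<ge> 1" "rprod (R_ring Quot ?I) (\<lambda>n. ?I +>\<^bsub>R_ring\<^esub> e n) n = \<zero>\<^bsub>R_ring Quot ?I\<^esub>"
      using rt'[rule_format, of "\<lambda>n. ?I +>\<^bsub>R_ring\<^esub> e n", OF mem[rule_format]] by (elim exE conjE) simp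
    then obtain m where m: "n = Suc m" by (cases n) auto
    have q1: "rprod (R_ring Quot ?I) (\<lambda>n. ?I +>\<^bsub>R_ring\<^esub> e n) n = ?I +>\<^bsub>R_ring\<^esub> rprod R_ring e n"
      by (rule rprod_quot[OF I ec])
    have q2: "rprod R_ring e n = mat_unit (m+2) 1" unfolding m e_def by (rule rprod_units)
    have "?I +>\<^bsub>R_ring\<^esub> mat_unit (m+2) 1 = ?I"
      using n(2) unfolding q1 q2 quot_zero .
    moreover have "(mat_unit (m+2) 1 :: 'k mat) \<in> carrier R_ring" using unit_N[of 1 "m+2"] N_sub_R by simp
    ultimately have "mat_unit (m+2) 1 \<in> ?I" using ideal.rcos_const_imp_mem[OF I] by simp
    then have "(mat_unit (m+2) 1 :: 'k mat) \<in> Jcol" using IJ by (rule subsetD[rotated])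
    then have "(mat_unit (m+2) 1 :: 'k mat) (m+2) 1 = 0" unfolding Jcol_def by simp
    then show False by (simp add: mat_unit_def)
  qed
  have part2: "\<not> right_almost_perfect (R_ring :: 'k::field mat ring)"
  proof
    assume rap: "right_almost_perfect (R_ring :: 'k::field mat ring)"
    have "?I \<noteq> {\<zero>\<^bsub>R_ring\<^esub>}"
    proof
      assume "?I = {\<zero>\<^bsub>R_ring\<^esub>}"
      then have "(mat_unit 1 0 :: 'k mat) = (\<lambda>i j. 0)" using EI by simp
      then have "(mat_unit 1 0 :: 'k mat) 1 0 = 0" by simp
      then show False by (simp add: mat_unit_def)
    qed
    moreover have "?I \<noteq> carrier R_ring"
    proof
      assume "?I = carrier R_ring"
      then have "mat_one \<in> ?I" using one_closed by simp
      then have "(mat_one :: 'k mat) \<in> N_set" using IN by (rule subsetD[rotated])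
      then show False using one_notin_N[where 'k='k] by simp
    qed
    ultimately have "right_perfect ((R_ring :: 'k::field mat ring) Quot ?I)"
      using rap I unfolding right_almost_perfect_def by simp
    then show False using part3 by simp
  qed
  show ?thesis using part1 part2 part3 by simp
qed


end
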